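(* Let $X$ be a connected $G$-complex on which $G$ acts properly and cocompactly. Then any $G$-equivariant immersion $\phi\colon X\to X$ is an isomorphism.
   Context: Complexes are combinatorial 2-complexes and maps are combinatorial; a $G$-complex has a cellular $G$-action without inversions. An immersion is a locally injective combinatorial map. *)

theory Defs
  imports "HOL-Algebra.Group"
begin

text \<open>Each n-gon face contributes 2n oriented sides (each
geometric side with both orientations); cx_nx is the successor along the oriented
boundary cycle, cx_fl reverses the orientation of a side, cx_lb is the oriented edge
to which the side is attached.\<close>

record ('v,'e,'f,'s) cplx =
  cx_V  :: "'v set"
  cx_E  :: "'e set"
  cx_F  :: "'f set"
  cx_S  :: "'s set"
  cx_rv :: "'e \<Rightarrow> 'e"
  cx_src :: "'e \<Rightarrow> 'v"
  cx_fc :: "'s \<Rightarrow> 'f"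
  cx_nx :: "'s \<Rightarrow> 's"
  cx_fl :: "'s \<Rightarrow> 's"
  cx_lb :: "'s \<Rightarrow> 'e"

definition cx_tgt :: "('v,'e,'f,'s,'z) cplx_scheme \<Rightarrow> 'e \<Rightarrow> 'v" where
  "cx_tgt X e = cx_src X (cx_rv X e)"

definition complex2 :: "('v,'e,'f,'s,'z) cplx_scheme \<Rightarrow> bool" where
  "complex2 X \<longleftrightarrow>
     (\<forall>e\<in>cx_E X. cx_rv X e \<in> cx_E X \<and> cx_rv X (cx_rv X e) = e \<and> cx_rv X e \<noteq> e
                 \<and> cx_src X e \<in> cx_V X) \<and>
     (\<forall>s\<in>cx_S X. cx_nx X s \<in> cx_S X \<and> cx_fl X s \<in> cx_S X \<and> cx_fc X s \<in> cx_F X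
                 \<and> cx_lb X s \<in> cx_E X) \<and>
     bij_betw (cx_nx X) (cx_S X) (cx_S X) \<and>
     (\<forall>s\<in>cx_S X. cx_fl X (cx_fl X s) = s \<and> cx_fl X s \<noteq> s
                 \<and> cx_lb X (cx_fl X s) = cx_rv X (cx_lb X s)
                 \<and> cx_nx X (cx_fl X (cx_nx X s)) = cx_fl X s
                 \<and> cx_fc X (cx_nx X s) = cx_fc X s \<and> cx_fc X (cx_fl X s) = cx_fc X s
                 \<and> cx_src X (cx_lb X (cx_nx X s)) = cx_tgt X (cx_lb X s)) \<and>
     (\<forall>f\<in>cx_F X. \<exists>s\<in>cx_S X. cx_fc X s = f \<and> (\<exists>n>0. (cx_nx X ^^ n) s = s)
                 \<and> {t\<in>cx_S X. cx_fc X t = f}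
                     = {(cx_nx X ^^ k) s | k. True} \<union> {cx_fl X ((cx_nx X ^^ k) s) | k. True}
                 \<and> cx_fl X s \<notin> {(cx_nx X ^^ k) s | k. True})"

record ('v,'e,'f,'s,'w,'d,'g,'t) cmor =
  mv :: "'v \<Rightarrow> 'w"
  me :: "'e \<Rightarrow> 'd"
  mf :: "'f \<Rightarrow> 'g"
  ms :: "'s \<Rightarrow> 't"

definition cmap :: "('v,'e,'f,'s,'z) cplx_scheme \<Rightarrow> ('w,'d,'g,'t,'y) cplx_scheme
                     \<Rightarrow> ('v,'e,'f,'s,'w,'d,'g,'t) cmor \<Rightarrow> bool" where
  "cmap X Y \<phi> \<longleftrightarrow>
     mv \<phi> ` cx_V X \<subseteq> cx_V Y \<and> me \<phi> ` cx_E X \<subseteq> cx_E Y \<and>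
     mf \<phi> ` cx_F X \<subseteq> cx_F Y \<and> ms \<phi> ` cx_S X \<subseteq> cx_S Y \<and>
     (\<forall>e\<in>cx_E X. cx_src Y (me \<phi> e) = mv \<phi> (cx_src X e)
                 \<and> me \<phi> (cx_rv X e) = cx_rv Y (me \<phi> e)) \<and>
     (\<forall>s\<in>cx_S X. cx_fc Y (ms \<phi> s) = mf \<phi> (cx_fc X s)
                 \<and> ms \<phi> (cx_nx X s) = cx_nx Y (ms \<phi> s)
                 \<and> ms \<phi> (cx_fl X s) = cx_fl Y (ms \<phi> s)
                 \<and> cx_lb Y (ms \<phi> s) = me \<phi> (cx_lb X s)) \<and>
     (\<forall>f\<in>cx_F X. bij_betw (ms \<phi>) {s\<in>cx_S X. cx_fc X s = f}
                                  {t\<in>cx_S Y. cx_fc Y t = mf \<phi> f})"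

text \<open>Immersion = locally injective combinatorial map: injective on the edge-ends and on
the 2-cell corners (oriented sides starting) at every vertex.\<close>

definition immersion :: "('v,'e,'f,'s,'z) cplx_scheme \<Rightarrow> ('w,'d,'g,'t,'y) cplx_scheme
                     \<Rightarrow> ('v,'e,'f,'s,'w,'d,'g,'t) cmor \<Rightarrow> bool" where
  "immersion X Y \<phi> \<longleftrightarrow> cmap X Y \<phi> \<and>
     (\<forall>v\<in>cx_V X. inj_on (me \<phi>) {e\<in>cx_E X. cx_src X e = v}
                \<and> inj_on (ms \<phi>) {s\<in>cx_S X. cx_src X (cx_lb X s) = v})"

definition hcomp :: "('w,'d,'g,'t,'a,'b,'c,'u) cmor \<Rightarrow> ('v,'e,'f,'s,'w,'d,'g,'t) cmor
                     \<Rightarrow> ('v,'e,'f,'s,'a,'b,'c,'u) cmor" where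
  "hcomp \<psi> \<phi> = \<lparr>mv = mv \<psi> \<circ> mv \<phi>, me = me \<psi> \<circ> me \<phi>, mf = mf \<psi> \<circ> mf \<phi>, ms = ms \<psi> \<circ> ms \<phi>\<rparr>"

definition hid :: "('v,'e,'f,'s,'v,'e,'f,'s) cmor" where
  "hid = \<lparr>mv = id, me = id, mf = id, ms = id\<rparr>"

definition agree_on :: "('v,'e,'f,'s,'z) cplx_scheme \<Rightarrow> ('v,'e,'f,'s,'w,'d,'g,'t) cmor
                     \<Rightarrow> ('v,'e,'f,'s,'w,'d,'g,'t) cmor \<Rightarrow> bool" where
  "agree_on X \<phi> \<psi> \<longleftrightarrow>
     (\<forall>v\<in>cx_V X. mv \<phi> v = mv \<psi> v) \<and> (\<forall>e\<in>cx_E X. me \<phi> e = me \<psi> e) \<and>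
     (\<forall>f\<in>cx_F X. mf \<phi> f = mf \<psi> f) \<and> (\<forall>s\<in>cx_S X. ms \<phi> s = ms \<psi> s)"

definition cx_iso :: "('v,'e,'f,'s,'z) cplx_scheme \<Rightarrow> ('w,'d,'g,'t,'y) cplx_scheme
                     \<Rightarrow> ('v,'e,'f,'s,'w,'d,'g,'t) cmor \<Rightarrow> bool" where
  "cx_iso X Y \<phi> \<longleftrightarrow> cmap X Y \<phi> \<and>
     (\<exists>\<psi>. cmap Y X \<psi> \<and> agree_on X (hcomp \<psi> \<phi>) hid \<and> agree_on Y (hcomp \<phi> \<psi>) hid)"

definition cx_connected :: "('v,'e,'f,'s,'z) cplx_scheme \<Rightarrow> bool" where
  "cx_connected X \<longleftrightarrow>
     (\<forall>u\<in>cx_V X. \<forall>v\<in>cx_V X.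
        (u, v) \<in> {(cx_src X e, cx_tgt X e) | e. e \<in> cx_E X}\<^sup>*)"

definition G_complex :: "('g,'x) monoid_scheme \<Rightarrow> ('v,'e,'f,'s,'z) cplx_scheme
                     \<Rightarrow> ('g \<Rightarrow> ('v,'e,'f,'s,'v,'e,'f,'s) cmor) \<Rightarrow> bool" where
  "G_complex G X act \<longleftrightarrow> group G \<and> complex2 X \<and>
     (\<forall>g\<in>carrier G. cmap X X (act g)) \<and>
     agree_on X (act \<one>\<^bsub>G\<^esub>) hid \<and>
     (\<forall>g\<in>carrier G. \<forall>h\<in>carrier G. agree_on X (act (g \<otimes>\<^bsub>G\<^esub> h)) (hcomp (act g) (act h))) \<and>
     (\<forall>g\<in>carrier G. \<forall>e\<in>cx_E X. me (act g) e \<noteq> cx_rv X e)"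

definition proper_action :: "('g,'x) monoid_scheme \<Rightarrow> ('v,'e,'f,'s,'z) cplx_scheme
                     \<Rightarrow> ('g \<Rightarrow> ('v,'e,'f,'s,'v,'e,'f,'s) cmor) \<Rightarrow> bool" where
  "proper_action G X act \<longleftrightarrow>
     (\<forall>v\<in>cx_V X. finite {g\<in>carrier G. mv (act g) v = v}) \<and>
     (\<forall>e\<in>cx_E X. finite {g\<in>carrier G. me (act g) e = e}) \<and>
     (\<forall>f\<in>cx_F X. finite {g\<in>carrier G. mf (act g) f = f})"

definition cocompact_action :: "('g,'x) monoid_scheme \<Rightarrow> ('v,'e,'f,'s,'z) cplx_scheme
                     \<Rightarrow> ('g \<Rightarrow> ('v,'e,'f,'s,'v,'e,'f,'s) cmor) \<Rightarrow> bool" where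
  "cocompact_action G X act \<longleftrightarrow>
     finite ((\<lambda>v. (\<lambda>g. mv (act g) v) ` carrier G) ` cx_V X) \<and>
     finite ((\<lambda>e. (\<lambda>g. me (act g) e) ` carrier G) ` cx_E X) \<and>
     finite ((\<lambda>f. (\<lambda>g. mf (act g) f) ` carrier G) ` cx_F X)"

definition equivariant :: "('g,'x) monoid_scheme \<Rightarrow> ('v,'e,'f,'s,'z) cplx_scheme
                     \<Rightarrow> ('g \<Rightarrow> ('v,'e,'f,'s,'v,'e,'f,'s) cmor)
                     \<Rightarrow> ('v,'e,'f,'s,'v,'e,'f,'s) cmor \<Rightarrow> bool" where
  "equivariant G X act \<phi> \<longleftrightarrow>
     (\<forall>g\<in>carrier G. agree_on X (hcomp \<phi> (act g)) (hcomp (act g) \<phi>))"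

end

theory Submission
  imports Defs
begin

lemma cmapD:
  assumes "cmap X Y \<phi>"
  shows "mv \<phi> ` cx_V X \<subseteq> cx_V Y" "me \<phi> ` cx_E X \<subseteq> cx_E Y"
    "mf \<phi> ` cx_F X \<subseteq> cx_F Y" "ms \<phi> ` cx_S X \<subseteq> cx_S Y"
    "\<And>e. e \<in> cx_E X \<Longrightarrow> cx_src Y (me \<phi> e) = mv \<phi> (cx_src X e)"
    "\<And>e. e \<in> cx_E X \<Longrightarrow> me \<phi> (cx_rv X e) = cx_rv Y (me \<phi> e)"
    "\<And>s. s \<in> cx_S X \<Longrightarrow> cx_fc Y (ms \<phi> s) = mf \<phi> (cx_fc X s)"
    "\<And>s. s \<in> cx_S X \<Longrightarrow> ms \<phi> (cx_nx X s) = cx_nx Y (ms \<phi> s)"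
    "\<And>s. s \<in> cx_S X \<Longrightarrow> ms \<phi> (cx_fl X s) = cx_fl Y (ms \<phi> s)"
    "\<And>s. s \<in> cx_S X \<Longrightarrow> cx_lb Y (ms \<phi> s) = me \<phi> (cx_lb X s)"
    "\<And>f. f \<in> cx_F X \<Longrightarrow> bij_betw (ms \<phi>) {s\<in>cx_S X. cx_fc X s = f} {t\<in>cx_S Y. cx_fc Y t = mf \<phi> f}"
  using assms unfolding cmap_def by auto

lemma complex2D:
  assumes "complex2 X"
  shows "\<And>e. e \<in> cx_E X \<Longrightarrow> cx_rv X e \<in> cx_E X"
    "\<And>e. e \<in> cx_E X \<Longrightarrow> cx_src X e \<in> cx_V X"
    "\<And>s. s \<in> cx_S X \<Longrightarrow> cx_fc X s \<in> cx_F X"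
    "\<And>s. s \<in> cx_S X \<Longrightarrow> cx_lb X s \<in> cx_E X"
    "\<And>f. f \<in> cx_F X \<Longrightarrow> \<exists>s\<in>cx_S X. cx_fc X s = f"
    "\<And>s. s \<in> cx_S X \<Longrightarrow> cx_nx X s \<in> cx_S X"
    "\<And>s. s \<in> cx_S X \<Longrightarrow> cx_fl X s \<in> cx_S X"
  using assms unfolding complex2_def by blast+



lemma pigeon_nat:
  assumes "finite (range (f :: nat \<Rightarrow> 'a))"
  shows "\<exists>i j. i < j \<and> f i = f j"
proof -
  have "\<not> inj f" using assms finite_imageD infinite_UNIV_nat by blast
  then obtain i j where "i \<noteq> j" "f i = f j" unfolding inj_def by auto
  thus ?thesis by (metis linorder_neq_iff)
qed

lemma funpow_into: "f ` A \<subseteq> A \<Longrightarrow> x \<in> A \<Longrightarrow> (f ^^ n) x \<in> A"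
  by (induction n) auto

lemma funpow_inj: "f ` A \<subseteq> A \<Longrightarrow> inj_on f A \<Longrightarrow> inj_on (f ^^ n) A"
proof (induction n)
  case 0 then show ?case by simp
next
  case (Suc n)
  have "(f ^^ n) ` A \<subseteq> A" using funpow_into[OF Suc.prems(1)] by auto
  have "inj_on (f \<circ> (f ^^ n)) A"
    using Suc \<open>(f ^^ n) ` A \<subseteq> A\<close> by (intro comp_inj_on) (auto intro: inj_on_subset)
  then show ?case by (simp add: comp_def)
qed

lemma perm_periodic:
  assumes "finite B" "f ` B \<subseteq> B" "inj_on f B" "x \<in> B"
  shows "\<exists>m>0. (f ^^ m) x = x"
proof -
  have "range (\<lambda>n. (f ^^ n) x) \<subseteq> B" using funpow_into[OF assms(2) assms(4)] by auto
  hence "finite (range (\<lambda>n. (f ^^ n) x))" using assms(1) finite_subset by blast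
  then obtain i j where ij: "i < j" "(f ^^ i) x = (f ^^ j) x" using pigeon_nat by blast
  have "(f ^^ j) x = (f ^^ (i + (j - i))) x" using ij(1) by simp
  also have "\<dots> = (f ^^ i) ((f ^^ (j - i)) x)" by (simp only: funpow_add o_apply)
  finally have eq: "(f ^^ i) ((f ^^ (j - i)) x) = (f ^^ i) x" using ij(2) by simp
  have "(f ^^ (j - i)) x \<in> B" using funpow_into[OF assms(2) assms(4)] .
  hence "(f ^^ (j - i)) x = x"
    using inj_onD[OF funpow_inj[OF assms(2,3), of i] eq] assms(4) by blast
  thus ?thesis using ij(1) by (intro exI[of _ "j - i"]) auto
qed

locale eqsys = group G for G :: "('g,'b) monoid_scheme" (structure) +
  fixes A :: "'a set" and \<alpha> :: "'g \<Rightarrow> 'a \<Rightarrow> 'a" and p :: "'a \<Rightarrow> 'a"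
  assumes act_into: "g \<in> carrier G \<Longrightarrow> x \<in> A \<Longrightarrow> \<alpha> g x \<in> A"
    and act_one: "x \<in> A \<Longrightarrow> \<alpha> \<one> x = x"
    and act_mult: "g \<in> carrier G \<Longrightarrow> h \<in> carrier G \<Longrightarrow> x \<in> A \<Longrightarrow> \<alpha> (g \<otimes> h) x = \<alpha> g (\<alpha> h x)"
    and p_into: "x \<in> A \<Longrightarrow> p x \<in> A"
    and p_equiv: "g \<in> carrier G \<Longrightarrow> x \<in> A \<Longrightarrow> p (\<alpha> g x) = \<alpha> g (p x)"
    and fin_stab: "x \<in> A \<Longrightarrow> finite {g \<in> carrier G. \<alpha> g x = x}"
    and fin_orb: "finite ((\<lambda>x. (\<lambda>g. \<alpha> g x) ` carrier G) ` A)"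
begin

definition orb where "orb x = (\<lambda>g. \<alpha> g x) ` carrier G"
definition per where "per x \<longleftrightarrow> (\<exists>k>0. \<exists>g\<in>carrier G. (p ^^ k) x = \<alpha> g x)"
definition stab where "stab x = {g \<in> carrier G. \<alpha> g x = x}"

lemma inv_cancel1: "g \<in> carrier G \<Longrightarrow> x \<in> A \<Longrightarrow> \<alpha> (inv g) (\<alpha> g x) = x"
  by (metis act_mult act_one inv_closed l_inv)

lemma inv_cancel2: "g \<in> carrier G \<Longrightarrow> x \<in> A \<Longrightarrow> \<alpha> g (\<alpha> (inv g) x) = x"
  by (metis act_mult act_one inv_closed r_inv)

lemma p_img: "p ` A \<subseteq> A" using p_into by auto

lemma pow_in: "x \<in> A \<Longrightarrow> (p ^^ n) x \<in> A"
  using funpow_into[OF p_img] .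

lemma pow_equiv: "x \<in> A \<Longrightarrow> g \<in> carrier G \<Longrightarrow> (p ^^ n) (\<alpha> g x) = \<alpha> g ((p ^^ n) x)"
  by (induction n) (auto simp: p_equiv pow_in)

lemma per_mult:
  assumes "x \<in> A" "g \<in> carrier G" "(p ^^ k) x = \<alpha> g x"
  shows "\<exists>h\<in>carrier G. (p ^^ (k * m)) x = \<alpha> h x"
proof (induction m)
  case 0 then show ?case using act_one assms(1) by (intro bexI[of _ \<one>]) auto
next
  case (Suc m)
  then obtain h where h: "h \<in> carrier G" "(p ^^ (k * m)) x = \<alpha> h x" by blast
  have "(p ^^ (k * Suc m)) x = (p ^^ k) ((p ^^ (k * m)) x)"
    by (simp add: funpow_add)
  also have "\<dots> = (p ^^ k) (\<alpha> h x)" using h by simp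
  also have "\<dots> = \<alpha> h (\<alpha> g x)" using pow_equiv assms h by simp
  also have "\<dots> = \<alpha> (h \<otimes> g) x" using act_mult assms h by simp
  finally show ?case using h assms by blast
qed

lemma orb_eq: "x \<in> A \<Longrightarrow> y \<in> A \<Longrightarrow> orb x = orb y \<Longrightarrow> \<exists>g\<in>carrier G. y = \<alpha> g x"
proof -
  assume a: "x \<in> A" "y \<in> A" "orb x = orb y"
  have "y \<in> orb y" unfolding orb_def using act_one a by (intro image_eqI[of _ _ \<one>]) auto
  thus ?thesis using a unfolding orb_def by auto
qed

lemma ev_per_aux:
  assumes "x \<in> A"
  shows "\<exists>i j g. i < j \<and> g \<in> carrier G \<and> (p ^^ j) x = \<alpha> g ((p ^^ i) x)"
proof -
  have "range (\<lambda>n. orb ((p ^^ n) x)) \<subseteq> (\<lambda>x. (\<lambda>g. \<alpha> g x) ` carrier G) ` A"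
    using pow_in[OF assms] unfolding orb_def by auto
  hence "finite (range (\<lambda>n. orb ((p ^^ n) x)))" using fin_orb finite_subset by blast
  then obtain i j where ij: "i < j" "orb ((p ^^ i) x) = orb ((p ^^ j) x)" using pigeon_nat by blast
  then obtain g where "g \<in> carrier G" "(p ^^ j) x = \<alpha> g ((p ^^ i) x)"
    using orb_eq pow_in assms by blast
  thus ?thesis using ij by blast
qed

lemma ev_per: "x \<in> A \<Longrightarrow> \<exists>i. per ((p ^^ i) x)"
proof -
  assume x: "x \<in> A"
  then obtain i j g where ij: "i < j" "g \<in> carrier G" "(p ^^ j) x = \<alpha> g ((p ^^ i) x)"
    using ev_per_aux by blast
  have "(p ^^ j) x = (p ^^ ((j - i) + i)) x" using ij(1) by simp
  also have "\<dots> = (p ^^ (j - i)) ((p ^^ i) x)" by (simp only: funpow_add o_apply)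
  finally have "(p ^^ j) x = (p ^^ (j - i)) ((p ^^ i) x)" .
  hence "per ((p ^^ i) x)" unfolding per_def using ij by (intro exI[of _ "j - i"] conjI bexI[of _ g]) auto
  thus ?thesis by blast
qed

lemma inj_per: "inj_on p A \<Longrightarrow> x \<in> A \<Longrightarrow> per x"
proof -
  assume inj: "inj_on p A" and x: "x \<in> A"
  then obtain i j g where ij: "i < j" "g \<in> carrier G" "(p ^^ j) x = \<alpha> g ((p ^^ i) x)"
    using ev_per_aux by blast
  have "(p ^^ j) x = (p ^^ (i + (j - i))) x" using ij(1) by simp
  also have "\<dots> = (p ^^ i) ((p ^^ (j - i)) x)" by (simp only: funpow_add o_apply)
  finally have a: "(p ^^ j) x = (p ^^ i) ((p ^^ (j - i)) x)" .
  have b: "\<alpha> g ((p ^^ i) x) = (p ^^ i) (\<alpha> g x)" using pow_equiv x ij by simp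
  have eq: "(p ^^ i) ((p ^^ (j - i)) x) = (p ^^ i) (\<alpha> g x)" using a b ij(3) by simp
  have "(p ^^ (j - i)) x = \<alpha> g x"
    using inj_onD[OF funpow_inj[OF p_img inj, of i] eq] pow_in x act_into ij(2) by blast
  thus ?thesis using ij unfolding per_def by (intro exI[of _ "j - i"]) auto
qed

lemma stab_sub: "x \<in> A \<Longrightarrow> stab x \<subseteq> stab (p x)"
proof
  fix g assume "x \<in> A" "g \<in> stab x"
  thus "g \<in> stab (p x)" unfolding stab_def using p_equiv[of g x] by auto
qed

lemma stab_sub_pow: "x \<in> A \<Longrightarrow> stab x \<subseteq> stab ((p ^^ n) x)"
proof (induction n)
  case 0 then show ?case by simp
next
  case (Suc n) then show ?case using stab_sub pow_in by fastforce
qed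

lemma stab_card: 
  assumes "x \<in> A" "g \<in> carrier G"
  shows "card (stab (\<alpha> g x)) \<le> card (stab x)"
proof (rule card_inj_on_le[of "\<lambda>h. inv g \<otimes> h \<otimes> g"])
  show "finite (stab x)" unfolding stab_def using fin_stab assms by simp
  show "inj_on (\<lambda>h. inv g \<otimes> h \<otimes> g) (stab (\<alpha> g x))"
    by (rule inj_onI) (use assms in \<open>auto simp: stab_def\<close>)
  show "(\<lambda>h. inv g \<otimes> h \<otimes> g) ` stab (\<alpha> g x) \<subseteq> stab x"
  proof
    fix y assume "y \<in> (\<lambda>h. inv g \<otimes> h \<otimes> g) ` stab (\<alpha> g x)"
    then obtain h where h: "h \<in> carrier G" "\<alpha> h (\<alpha> g x) = \<alpha> g x" "y = inv g \<otimes> h \<otimes> g"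
      unfolding stab_def by auto
    have "\<alpha> y x = \<alpha> (inv g) (\<alpha> h (\<alpha> g x))"
      using h assms by (simp add: act_mult act_into)
    also have "\<dots> = x" using h assms inv_cancel1 by simp
    finally show "y \<in> stab x" unfolding stab_def using h assms by simp
  qed
qed

lemma stab_eq:
  assumes "x \<in> A" "per x"
  shows "stab (p x) = stab x"
proof -
  obtain k g where kg: "k > 0" "g \<in> carrier G" "(p ^^ k) x = \<alpha> g x"
    using assms unfolding per_def by blast
  obtain k' where k': "k = Suc k'" using kg(1) gr0_implies_Suc by blast
  have "(p ^^ k) x = (p ^^ k') (p x)" by (simp only: k' funpow_Suc_right o_apply)
  hence s1: "stab (p x) \<subseteq> stab (\<alpha> g x)" using stab_sub_pow[of "p x" k'] p_into assms kg by simp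
  have fin: "finite (stab (\<alpha> g x))" unfolding stab_def using fin_stab act_into assms kg by simp
  have "stab x = stab (\<alpha> g x)"
    using card_seteq[OF fin, of "stab x"] stab_sub assms s1 stab_card kg by blast
  thus ?thesis using s1 stab_sub assms by blast
qed

lemma all_per_inj:
  assumes "\<forall>x\<in>A. per x"
  shows "inj_on p A"
proof (rule inj_onI)
  fix x1 x2 assume x: "x1 \<in> A" "x2 \<in> A" "p x1 = p x2"
  obtain k1 g1 where 1: "k1 > 0" "g1 \<in> carrier G" "(p ^^ k1) x1 = \<alpha> g1 x1"
    using assms x unfolding per_def by blast
  obtain k2 g2 where 2: "k2 > 0" "g2 \<in> carrier G" "(p ^^ k2) x2 = \<alpha> g2 x2"
    using assms x unfolding per_def by blast
  obtain h1 where h1: "h1 \<in> carrier G" "(p ^^ (k1 * k2)) x1 = \<alpha> h1 x1"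
    using per_mult[OF x(1) 1(2,3)] by blast
  obtain h2 where h2: "h2 \<in> carrier G" "(p ^^ (k2 * k1)) x2 = \<alpha> h2 x2"
    using per_mult[OF x(2) 2(2,3)] by blast
  have "k1 * k2 > 0" using 1(1) 2(1) by simp
  then obtain K where K: "k1 * k2 = Suc K" using gr0_implies_Suc by blast
  have "(p ^^ (k1 * k2)) x1 = (p ^^ (k1 * k2)) x2"
    by (simp only: K funpow_Suc_right o_apply x(3))
  moreover have "(p ^^ (k1 * k2)) x2 = \<alpha> h2 x2" using h2(2) by (metis mult.commute)
  ultimately have e: "\<alpha> h1 x1 = \<alpha> h2 x2" using h1(2) by simp
  define c where "c = inv h2 \<otimes> h1"
  have c: "c \<in> carrier G" unfolding c_def using h1 h2 by simp
  have "\<alpha> c x1 = \<alpha> (inv h2) (\<alpha> h1 x1)" unfolding c_def using h1 h2 x act_mult by simp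
  also have "\<dots> = x2" using e inv_cancel1 h2 x by simp
  finally have x2: "x2 = \<alpha> c x1" by simp
  have "p x1 = p (\<alpha> c x1)" using x(3) x2 by simp
  also have "\<dots> = \<alpha> c (p x1)" using p_equiv c x(1) by blast
  finally have "p x1 = \<alpha> c (p x1)" .
  hence "c \<in> stab (p x1)" unfolding stab_def using c by simp
  moreover have "stab (p x1) = stab x1" using stab_eq assms x(1) by blast
  ultimately have "c \<in> stab x1" by simp
  thus "x1 = x2" using x2 unfolding stab_def by simp
qed

lemma all_per_surj:
  assumes "\<forall>x\<in>A. per x"
  shows "p ` A = A"
proof
  show "p ` A \<subseteq> A" by (rule p_img)
  show "A \<subseteq> p ` A"
  proof
    fix u assume u: "u \<in> A"
    obtain k g where kg: "k > 0" "g \<in> carrier G" "(p ^^ k) u = \<alpha> g u"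
      using assms u unfolding per_def by blast
    obtain k' where k': "k = Suc k'" using kg(1) gr0_implies_Suc by blast
    have "u = \<alpha> (inv g) ((p ^^ k) u)" using kg u inv_cancel1 by simp
    also have "\<dots> = (p ^^ k) (\<alpha> (inv g) u)" using pow_equiv u kg by simp
    also have "\<dots> = p ((p ^^ k') (\<alpha> (inv g) u))" using k' by simp
    finally show "u \<in> p ` A" using pow_in act_into u kg by blast
  qed
qed

end



locale L =
  fixes G :: "('g,'x) monoid_scheme" and X :: "('v,'e,'f,'s) cplx"
    and act :: "'g \<Rightarrow> ('v,'e,'f,'s,'v,'e,'f,'s) cmor"
    and \<phi> :: "('v,'e,'f,'s,'v,'e,'f,'s) cmor"
  assumes GC: "G_complex G X act" and conn: "cx_connected X" and prp: "proper_action G X act"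
    and coc: "cocompact_action G X act" and eqv: "equivariant G X act \<phi>"
    and imm: "immersion X X \<phi>"
begin

lemma grp: "group G" using GC unfolding G_complex_def by blast
lemma cx: "complex2 X" using GC unfolding G_complex_def by blast
lemma actmap: "g \<in> carrier G \<Longrightarrow> cmap X X (act g)" using GC unfolding G_complex_def by blast
lemma phimap: "cmap X X \<phi>" using imm unfolding immersion_def by blast
lemma one_agree: "agree_on X (act \<one>\<^bsub>G\<^esub>) hid" using GC unfolding G_complex_def by blast
lemma mult_agree: "g \<in> carrier G \<Longrightarrow> h \<in> carrier G \<Longrightarrow>
   agree_on X (act (g \<otimes>\<^bsub>G\<^esub> h)) (hcomp (act g) (act h))"
  using GC unfolding G_complex_def by blast
lemma eqv_agree: "g \<in> carrier G \<Longrightarrow> agree_on X (hcomp \<phi> (act g)) (hcomp (act g) \<phi>)"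
  using eqv unfolding equivariant_def by blast

sublocale V: eqsys G "cx_V X" "\<lambda>g. mv (act g)" "mv \<phi>"
  apply (rule eqsys.intro[OF grp])
  apply (rule eqsys_axioms.intro)
  subgoal using cmapD(1)[OF actmap] by blast
  subgoal using one_agree unfolding agree_on_def hid_def by simp
  subgoal using mult_agree unfolding agree_on_def hcomp_def by simp
  subgoal using cmapD(1)[OF phimap] by blast
  subgoal using eqv_agree unfolding agree_on_def hcomp_def by simp
  subgoal using prp unfolding proper_action_def by blast
  subgoal using coc unfolding cocompact_action_def by blast
  done

sublocale E: eqsys G "cx_E X" "\<lambda>g. me (act g)" "me \<phi>"
  apply (rule eqsys.intro[OF grp])
  apply (rule eqsys_axioms.intro)
  subgoal using cmapD(2)[OF actmap] by blast
  subgoal using one_agree unfolding agree_on_def hid_def by simp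
  subgoal using mult_agree unfolding agree_on_def hcomp_def by simp
  subgoal using cmapD(2)[OF phimap] by blast
  subgoal using eqv_agree unfolding agree_on_def hcomp_def by simp
  subgoal using prp unfolding proper_action_def by blast
  subgoal using coc unfolding cocompact_action_def by blast
  done

sublocale F: eqsys G "cx_F X" "\<lambda>g. mf (act g)" "mf \<phi>"
  apply (rule eqsys.intro[OF grp])
  apply (rule eqsys_axioms.intro)
  subgoal using cmapD(3)[OF actmap] by blast
  subgoal using one_agree unfolding agree_on_def hid_def by simp
  subgoal using mult_agree unfolding agree_on_def hcomp_def by simp
  subgoal using cmapD(3)[OF phimap] by blast
  subgoal using eqv_agree unfolding agree_on_def hcomp_def by simp
  subgoal using prp unfolding proper_action_def by blast
  subgoal using coc unfolding cocompact_action_def by blast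
  done

abbreviation "src \<equiv> cx_src X"
abbreviation "rv \<equiv> cx_rv X"
abbreviation "tgt \<equiv> cx_tgt X"
abbreviation "pv \<equiv> mv \<phi>"
abbreviation "pe \<equiv> me \<phi>"
abbreviation av where "av g \<equiv> mv (act g)"
abbreviation ae where "ae g \<equiv> me (act g)"

definition Ev where "Ev x = {e \<in> cx_E X. src e = x}"

lemma e_facts: "e \<in> cx_E X \<Longrightarrow> rv e \<in> cx_E X \<and> src e \<in> cx_V X"
  using complex2D[OF cx] by blast

lemma src_ae: "g \<in> carrier G \<Longrightarrow> e \<in> cx_E X \<Longrightarrow> src (ae g e) = av g (src e)"
  using cmapD(5)[OF actmap] by blast
lemma rv_ae: "g \<in> carrier G \<Longrightarrow> e \<in> cx_E X \<Longrightarrow> ae g (rv e) = rv (ae g e)"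
  using cmapD(6)[OF actmap] by blast
lemma src_pe: "e \<in> cx_E X \<Longrightarrow> src (pe e) = pv (src e)"
  using cmapD(5)[OF phimap] by blast
lemma rv_pe: "e \<in> cx_E X \<Longrightarrow> pe (rv e) = rv (pe e)"
  using cmapD(6)[OF phimap] by blast

lemma tgt_pe: "e \<in> cx_E X \<Longrightarrow> tgt (pe e) = pv (tgt e)"
  unfolding cx_tgt_def using e_facts[of e] by (simp add: rv_pe[symmetric] src_pe)
lemma tgt_ae: "g \<in> carrier G \<Longrightarrow> e \<in> cx_E X \<Longrightarrow> tgt (ae g e) = av g (tgt e)"
  unfolding cx_tgt_def using e_facts[of e] by (simp add: rv_ae[symmetric] src_ae)

lemma tgt_pe_pow: "e \<in> cx_E X \<Longrightarrow> tgt ((pe ^^ n) e) = (pv ^^ n) (tgt e)"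
  by (induction n) (auto simp: tgt_pe E.pow_in)
lemma src_pe_pow: "e \<in> cx_E X \<Longrightarrow> src ((pe ^^ n) e) = (pv ^^ n) (src e)"
  by (induction n) (auto simp: src_pe E.pow_in)

lemma loc_inj: "v \<in> cx_V X \<Longrightarrow> inj_on pe (Ev v)"
  using imm unfolding immersion_def Ev_def by blast

lemma pe_pow_inj: "v \<in> cx_V X \<Longrightarrow> inj_on (pe ^^ n) (Ev v) \<and> (pe ^^ n) ` Ev v \<subseteq> Ev ((pv ^^ n) v)"
proof (induction n)
  case 0 then show ?case by simp
next
  case (Suc n)
  have into: "(pe ^^ Suc n) ` Ev v \<subseteq> Ev ((pv ^^ Suc n) v)"
    using Suc src_pe E.p_into unfolding Ev_def by auto
  have "inj_on (pe \<circ> (pe ^^ n)) (Ev v)"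
    apply (rule comp_inj_on)
    using Suc apply blast
    using Suc loc_inj[of "(pv ^^ n) v"] V.pow_in inj_on_subset by blast
  then show ?case using into by (simp add: comp_def)
qed

lemma fin_piece:
  assumes e0: "e0 \<in> cx_E X" and x: "x \<in> cx_V X"
  shows "finite {y \<in> E.orb e0. src y = x}"
proof (cases "{y \<in> E.orb e0. src y = x} = {}")
  case True show ?thesis unfolding True by simp
next
  case False
  then obtain h0 where h0: "h0 \<in> carrier G" "src (ae h0 e0) = x" unfolding E.orb_def by auto
  hence h0': "av h0 (src e0) = x" using src_ae e0 by simp
  have s0: "src e0 \<in> cx_V X" using e_facts e0 by blast
  have "{y \<in> E.orb e0. src y = x} \<subseteq> (\<lambda>t. ae h0 (ae t e0)) ` V.stab (src e0)"
  proof
    fix y assume "y \<in> {y \<in> E.orb e0. src y = x}"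
    then obtain h where h: "h \<in> carrier G" "y = ae h e0" "src y = x" unfolding E.orb_def by auto
    define t where "t = inv\<^bsub>G\<^esub> h0 \<otimes>\<^bsub>G\<^esub> h"
    have t: "t \<in> carrier G" unfolding t_def using h h0 by simp
    have "h0 \<otimes>\<^bsub>G\<^esub> t = (h0 \<otimes>\<^bsub>G\<^esub> inv\<^bsub>G\<^esub> h0) \<otimes>\<^bsub>G\<^esub> h"
      unfolding t_def using h h0 V.m_assoc[of h0 "inv\<^bsub>G\<^esub> h0" h] V.inv_closed[of h0] by simp
    also have "\<dots> = h" using h h0 by simp
    finally have ht: "h0 \<otimes>\<^bsub>G\<^esub> t = h" .
    have y: "ae h0 (ae t e0) = y" using E.act_mult[OF h0(1) t e0] ht h(2) by simp
    have "av t (src e0) = av (inv\<^bsub>G\<^esub> h0) (av h (src e0))"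
      unfolding t_def using V.act_mult h h0 s0 by simp
    also have "\<dots> = av (inv\<^bsub>G\<^esub> h0) (av h0 (src e0))" using h src_ae e0 h0' by simp
    also have "\<dots> = src e0" using V.inv_cancel1 h0 s0 by simp
    finally have "t \<in> V.stab (src e0)" unfolding V.stab_def using t by simp
    thus "y \<in> (\<lambda>t. ae h0 (ae t e0)) ` V.stab (src e0)" using y by blast
  qed
  moreover have "finite (V.stab (src e0))" unfolding V.stab_def using V.fin_stab s0 by simp
  ultimately show ?thesis using finite_subset by blast
qed

lemma fin_Ev: "x \<in> cx_V X \<Longrightarrow> finite (Ev x)"
proof -
  assume x: "x \<in> cx_V X"
  have sub: "Ev x \<subseteq> (\<Union>B \<in> E.orb ` cx_E X. {y \<in> B. src y = x})"
  proof
    fix y assume y: "y \<in> Ev x"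
    hence "y \<in> E.orb y" unfolding E.orb_def Ev_def using E.act_one
      by (intro image_eqI[of _ _ "\<one>\<^bsub>G\<^esub>"]) (auto simp: grp group.is_monoid monoid.one_closed)
    thus "y \<in> (\<Union>B \<in> E.orb ` cx_E X. {y \<in> B. src y = x})" using y unfolding Ev_def by blast
  qed
  moreover have "finite (E.orb ` cx_E X)"
  proof -
    have "E.orb = (\<lambda>x. (\<lambda>g. ae g x) ` carrier G)" unfolding E.orb_def by (rule ext) simp
    thus ?thesis using E.fin_orb by simp
  qed
  moreover have "\<forall>B \<in> E.orb ` cx_E X. finite {y \<in> B. src y = x}" using fin_piece x by blast
  ultimately have "finite (\<Union>B \<in> E.orb ` cx_E X. {y \<in> B. src y = x})"
    by (intro finite_UN_I) auto
  thus ?thesis using sub finite_subset by blast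
qed

end



context L begin

lemma propag:
  assumes v: "v \<in> cx_V X" and k: "k > 0" and g: "g \<in> carrier G"
    and kv: "(pv ^^ k) v = av g v" and e: "e \<in> Ev v"
  shows "E.per e \<and> V.per (tgt e)"
proof -
  define w where "w = av g v"
  have w: "w \<in> cx_V X" unfolding w_def using V.act_into g v by blast
  have Ew: "Ev w = ae g ` Ev v"
  proof
    show "ae g ` Ev v \<subseteq> Ev w" unfolding Ev_def w_def using E.act_into g src_ae by auto
    show "Ev w \<subseteq> ae g ` Ev v"
    proof
      fix z assume z: "z \<in> Ev w"
      hence zE: "z \<in> cx_E X" and zs: "src z = w" unfolding Ev_def by auto
      have iz: "ae (inv\<^bsub>G\<^esub> g) z \<in> cx_E X" using E.act_into zE g by simp
      have "src (ae (inv\<^bsub>G\<^esub> g) z) = av (inv\<^bsub>G\<^esub> g) w" using src_ae zE g zs by simp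
      also have "\<dots> = v" unfolding w_def using V.inv_cancel1 g v by simp
      finally have "ae (inv\<^bsub>G\<^esub> g) z \<in> Ev v" unfolding Ev_def using iz by simp
      moreover have "z = ae g (ae (inv\<^bsub>G\<^esub> g) z)" using E.inv_cancel2 g zE by simp
      ultimately show "z \<in> ae g ` Ev v" by blast
    qed
  qed
  have finv: "finite (Ev v)" using fin_Ev v by blast
  have finw: "finite (Ev w)" using fin_Ev w by blast
  have inj: "inj_on (pe ^^ k) (Ev v)" and into: "(pe ^^ k) ` Ev v \<subseteq> Ev w"
    using pe_pow_inj[OF v, of k] kv unfolding w_def by auto
  have "card (Ev w) \<le> card (Ev v)" unfolding Ew using card_image_le finv by blast
  also have "\<dots> = card ((pe ^^ k) ` Ev v)" using card_image inj by metis
  finally have surjk: "(pe ^^ k) ` Ev v = Ev w" using card_seteq[OF finw into] by blast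
  define \<theta> where "\<theta> x = ae (inv\<^bsub>G\<^esub> g) ((pe ^^ k) x)" for x
  have EvE: "Ev v \<subseteq> cx_E X" unfolding Ev_def by auto
  have th_into: "\<theta> ` Ev v \<subseteq> Ev v"
  proof
    fix y assume "y \<in> \<theta> ` Ev v"
    then obtain x where x: "x \<in> Ev v" "y = \<theta> x" by blast
    have "(pe ^^ k) x \<in> ae g ` Ev v" using surjk Ew x by blast
    then obtain z where z: "z \<in> Ev v" "(pe ^^ k) x = ae g z" by blast
    have "y = z" unfolding x \<theta>_def z(2) using E.inv_cancel1 g z EvE by blast
    thus "y \<in> Ev v" using z by simp
  qed
  have th_inj: "inj_on \<theta> (Ev v)"
  proof (rule inj_onI)
    fix x1 x2 assume x: "x1 \<in> Ev v" "x2 \<in> Ev v" "\<theta> x1 = \<theta> x2"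
    have i1: "(pe ^^ k) x1 \<in> cx_E X" "(pe ^^ k) x2 \<in> cx_E X" using E.pow_in x EvE by auto
    have "(pe ^^ k) x1 = ae g (\<theta> x1)" unfolding \<theta>_def using E.inv_cancel2 g i1 by simp
    also have "\<dots> = ae g (\<theta> x2)" using x by simp
    also have "\<dots> = (pe ^^ k) x2" unfolding \<theta>_def using E.inv_cancel2 g i1 by simp
    finally show "x1 = x2" using inj x inj_onD by metis
  qed
  obtain m where m: "m > 0" "(\<theta> ^^ m) e = e" using perm_periodic[OF finv th_into th_inj e] by blast
  have thpow: "\<exists>h\<in>carrier G. (\<theta> ^^ n) x = ae h ((pe ^^ (k * n)) x)" if x: "x \<in> cx_E X" for n x
  proof (induction n)
    case 0 then show ?case using E.act_one x by (intro bexI[of _ "\<one>\<^bsub>G\<^esub>"]) auto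
  next
    case (Suc n)
    then obtain h where h: "h \<in> carrier G" "(\<theta> ^^ n) x = ae h ((pe ^^ (k * n)) x)" by blast
    have pin: "(pe ^^ (k * n)) x \<in> cx_E X" using E.pow_in x by blast
    have "(\<theta> ^^ Suc n) x = ae (inv\<^bsub>G\<^esub> g) ((pe ^^ k) (ae h ((pe ^^ (k * n)) x)))"
      using h by (simp add: \<theta>_def)
    also have "\<dots> = ae (inv\<^bsub>G\<^esub> g) (ae h ((pe ^^ k) ((pe ^^ (k * n)) x)))"
      using E.pow_equiv pin h by simp
    also have "\<dots> = ae (inv\<^bsub>G\<^esub> g \<otimes>\<^bsub>G\<^esub> h) ((pe ^^ k) ((pe ^^ (k * n)) x))"
      using E.act_mult h g E.pow_in pin by simp
    also have "(pe ^^ k) ((pe ^^ (k * n)) x) = (pe ^^ (k * Suc n)) x"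
      by (simp add: funpow_add)
    finally show ?case using h g by blast
  qed
  have eE: "e \<in> cx_E X" using e EvE by blast
  obtain h where h: "h \<in> carrier G" "(\<theta> ^^ m) e = ae h ((pe ^^ (k * m)) e)"
    using thpow[OF eE] by blast
  have pin: "(pe ^^ (k * m)) e \<in> cx_E X" using E.pow_in eE by blast
  have pe_per: "(pe ^^ (k * m)) e = ae (inv\<^bsub>G\<^esub> h) e"
    using h m(2) E.inv_cancel1[OF h(1) pin] by simp
  have km: "k * m > 0" using k m by simp
  have "E.per e" unfolding E.per_def using km pe_per h
    by (intro exI[of _ "k * m"] conjI bexI[of _ "inv\<^bsub>G\<^esub> h"]) auto
  moreover have "V.per (tgt e)"
  proof -
    have "(pv ^^ (k * m)) (tgt e) = tgt ((pe ^^ (k * m)) e)" using tgt_pe_pow eE by simp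
    also have "\<dots> = av (inv\<^bsub>G\<^esub> h) (tgt e)" using pe_per tgt_ae h eE by simp
    finally show ?thesis unfolding V.per_def using km h
      by (intro exI[of _ "k * m"] conjI bexI[of _ "inv\<^bsub>G\<^esub> h"]) auto
  qed
  ultimately show ?thesis by blast
qed

lemma all_V_per: "\<forall>v \<in> cx_V X. V.per v"
proof
  fix v assume v: "v \<in> cx_V X"
  obtain i where i: "V.per ((pv ^^ i) v)" using V.ev_per v by blast
  define u0 where "u0 = (pv ^^ i) v"
  have u0: "u0 \<in> cx_V X" "V.per u0" unfolding u0_def using i V.pow_in v by auto
  have "(u0, v) \<in> {(cx_src X e, cx_tgt X e) | e. e \<in> cx_E X}\<^sup>*"
    using conn u0 v unfolding cx_connected_def by blast
  hence "v \<in> cx_V X \<and> V.per v"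
  proof (induction rule: rtrancl_induct)
    case base then show ?case using u0 by blast
  next
    case (step y z)
    then obtain e where e: "e \<in> cx_E X" "y = src e" "z = tgt e" by blast
    obtain k g where kg: "k > 0" "g \<in> carrier G" "(pv ^^ k) y = av g y"
      using step(3) unfolding V.per_def by blast
    have "e \<in> Ev y" unfolding Ev_def using e by simp
    hence "V.per z" using propag[of y k g e] step(3) kg e by blast
    moreover have "z \<in> cx_V X" using e e_facts unfolding cx_tgt_def by blast
    ultimately show ?case by blast
  qed
  thus "V.per v" by blast
qed

lemma all_E_per: "\<forall>e \<in> cx_E X. E.per e"
proof
  fix e assume e: "e \<in> cx_E X"
  hence s: "src e \<in> cx_V X" using e_facts by blast
  obtain k g where kg: "k > 0" "g \<in> carrier G" "(pv ^^ k) (src e) = av g (src e)"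
    using all_V_per s unfolding V.per_def by blast
  have "e \<in> Ev (src e)" unfolding Ev_def using e by simp
  thus "E.per e" using propag[OF s kg] by blast
qed

end



context L begin

abbreviation "pf \<equiv> mf \<phi>"
abbreviation "ps \<equiv> ms \<phi>"

lemma pv_inj: "inj_on pv (cx_V X)" using V.all_per_inj all_V_per by blast
lemma pv_surj: "pv ` cx_V X = cx_V X" using V.all_per_surj all_V_per by blast
lemma pe_inj: "inj_on pe (cx_E X)" using E.all_per_inj all_E_per by blast
lemma pe_surj: "pe ` cx_E X = cx_E X" using E.all_per_surj all_E_per by blast

lemma loc_inj_s: "v \<in> cx_V X \<Longrightarrow> inj_on ps {s \<in> cx_S X. src (cx_lb X s) = v}"
  using imm unfolding immersion_def by blast

lemma ps_inj: "inj_on ps (cx_S X)"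
proof (rule inj_onI)
  fix s1 s2 assume s: "s1 \<in> cx_S X" "s2 \<in> cx_S X" "ps s1 = ps s2"
  have l: "cx_lb X s1 \<in> cx_E X" "cx_lb X s2 \<in> cx_E X" using complex2D(4)[OF cx] s by auto
  have "pe (cx_lb X s1) = pe (cx_lb X s2)" using cmapD(10)[OF phimap] s by metis
  hence lb: "cx_lb X s1 = cx_lb X s2" using pe_inj l inj_onD by metis
  have v: "src (cx_lb X s1) \<in> cx_V X" using e_facts l by blast
  show "s1 = s2" using inj_onD[OF loc_inj_s[OF v] s(3)] s lb by auto
qed

lemma pf_inj: "inj_on pf (cx_F X)"
proof (rule inj_onI)
  fix f1 f2 assume f: "f1 \<in> cx_F X" "f2 \<in> cx_F X" "pf f1 = pf f2"
  obtain s1 where s1: "s1 \<in> cx_S X" "cx_fc X s1 = f1" using complex2D(5)[OF cx] f by blast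
  have "ps s1 \<in> {t \<in> cx_S X. cx_fc X t = pf f2}"
    using cmapD(4)[OF phimap] cmapD(7)[OF phimap, OF s1(1)] s1 f by auto
  then obtain s2 where s2: "s2 \<in> {s \<in> cx_S X. cx_fc X s = f2}" "ps s2 = ps s1"
    using cmapD(11)[OF phimap f(2)] unfolding bij_betw_def by (metis (no_types, lifting) imageE)
  have "s1 = s2" using ps_inj s1 s2 inj_onD by fastforce
  thus "f1 = f2" using s1 s2 by simp
qed

lemma pf_surj: "pf ` cx_F X = cx_F X"
  using F.all_per_surj F.inj_per pf_inj by blast

lemma ps_surj: "ps ` cx_S X = cx_S X"
proof
  show "ps ` cx_S X \<subseteq> cx_S X" using cmapD(4)[OF phimap] .
  show "cx_S X \<subseteq> ps ` cx_S X"
  proof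
    fix t assume t: "t \<in> cx_S X"
    have "cx_fc X t \<in> cx_F X" using complex2D(3)[OF cx] t by blast
    then obtain f where f: "f \<in> cx_F X" "pf f = cx_fc X t" using pf_surj by (metis imageE)
    have "t \<in> {t \<in> cx_S X. cx_fc X t = pf f}" using t f by simp
    then obtain s where "s \<in> {s \<in> cx_S X. cx_fc X s = f}" "t = ps s"
      using cmapD(11)[OF phimap f(1)] unfolding bij_betw_def by blast
    thus "t \<in> ps ` cx_S X" by blast
  qed
qed

lemma main: "cx_iso X X \<phi>"
proof -
  define iv where "iv = inv_into (cx_V X) pv"
  define ie where "ie = inv_into (cx_E X) pe"
  define if' where "if' = inv_into (cx_F X) pf"
  define iS where "iS = inv_into (cx_S X) ps"
  define \<psi> :: "('v,'e,'f,'s,'v,'e,'f,'s) cmor" where "\<psi> = \<lparr>mv = iv, me = ie, mf = if', ms = iS\<rparr>"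
  have iv_in: "x \<in> cx_V X \<Longrightarrow> iv x \<in> cx_V X" for x
    unfolding iv_def using pv_surj inv_into_into[of x pv "cx_V X"] by simp
  have iv1: "x \<in> cx_V X \<Longrightarrow> pv (iv x) = x" for x
    unfolding iv_def using pv_surj f_inv_into_f[of x pv "cx_V X"] by simp
  have iv2: "x \<in> cx_V X \<Longrightarrow> iv (pv x) = x" for x
    unfolding iv_def using pv_inj inv_into_f_f[of pv "cx_V X" x] by simp
  have ie_in: "x \<in> cx_E X \<Longrightarrow> ie x \<in> cx_E X" for x
    unfolding ie_def using pe_surj inv_into_into[of x pe "cx_E X"] by simp
  have ie1: "x \<in> cx_E X \<Longrightarrow> pe (ie x) = x" for x
    unfolding ie_def using pe_surj f_inv_into_f[of x pe "cx_E X"] by simp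
  have ie2: "x \<in> cx_E X \<Longrightarrow> ie (pe x) = x" for x
    unfolding ie_def using pe_inj inv_into_f_f[of pe "cx_E X" x] by simp
  have if_in: "x \<in> cx_F X \<Longrightarrow> if' x \<in> cx_F X" for x
    unfolding if'_def using pf_surj inv_into_into[of x pf "cx_F X"] by simp
  have if1: "x \<in> cx_F X \<Longrightarrow> pf (if' x) = x" for x
    unfolding if'_def using pf_surj f_inv_into_f[of x pf "cx_F X"] by simp
  have if2: "x \<in> cx_F X \<Longrightarrow> if' (pf x) = x" for x
    unfolding if'_def using pf_inj inv_into_f_f[of pf "cx_F X" x] by simp
  have is_in: "x \<in> cx_S X \<Longrightarrow> iS x \<in> cx_S X" for x
    unfolding iS_def using ps_surj inv_into_into[of x ps "cx_S X"] by simp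
  have is1: "x \<in> cx_S X \<Longrightarrow> ps (iS x) = x" for x
    unfolding iS_def using ps_surj f_inv_into_f[of x ps "cx_S X"] by simp
  have is2: "x \<in> cx_S X \<Longrightarrow> iS (ps x) = x" for x
    unfolding iS_def using ps_inj inv_into_f_f[of ps "cx_S X" x] by simp
  note M = cmapD[OF phimap]
  have c5: "\<forall>e\<in>cx_E X. src (ie e) = iv (src e) \<and> ie (rv e) = rv (ie e)"
  proof
    fix e assume e: "e \<in> cx_E X"
    define e0 where "e0 = ie e"
    have e0: "e0 \<in> cx_E X" "pe e0 = e" unfolding e0_def using ie_in ie1 e by auto
    have r0: "rv e0 \<in> cx_E X" "src e0 \<in> cx_V X" using e_facts e0 by auto
    have "iv (src e) = src e0" using M(5)[OF e0(1)] e0(2) iv2[OF r0(2)] by simp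
    moreover have "ie (rv e) = rv e0" using M(6)[OF e0(1)] e0(2) ie2[OF r0(1)] by simp
    ultimately show "src (ie e) = iv (src e) \<and> ie (rv e) = rv (ie e)" unfolding e0_def by simp
  qed
  have c6: "\<forall>s\<in>cx_S X. cx_fc X (iS s) = if' (cx_fc X s) \<and> iS (cx_nx X s) = cx_nx X (iS s)
      \<and> iS (cx_fl X s) = cx_fl X (iS s) \<and> cx_lb X (iS s) = ie (cx_lb X s)"
  proof
    fix s assume s: "s \<in> cx_S X"
    define s0 where "s0 = iS s"
    have s0: "s0 \<in> cx_S X" "ps s0 = s" unfolding s0_def using is_in is1 s by auto
    have cs: "cx_fc X s0 \<in> cx_F X" "cx_lb X s0 \<in> cx_E X"
      using complex2D(3,4)[OF cx] s0 by auto
    have ns: "cx_nx X s0 \<in> cx_S X" "cx_fl X s0 \<in> cx_S X"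
      using complex2D(6,7)[OF cx] s0(1) by auto
    have "if' (cx_fc X s) = cx_fc X s0" using M(7)[OF s0(1)] s0(2) if2[OF cs(1)] by simp
    moreover have "iS (cx_nx X s) = cx_nx X s0" using M(8)[OF s0(1)] s0(2) is2[OF ns(1)] by simp
    moreover have "iS (cx_fl X s) = cx_fl X s0" using M(9)[OF s0(1)] s0(2) is2[OF ns(2)] by simp
    moreover have "ie (cx_lb X s) = cx_lb X s0" using M(10)[OF s0(1)] s0(2) ie2[OF cs(2)] by simp
    ultimately show "cx_fc X (iS s) = if' (cx_fc X s) \<and> iS (cx_nx X s) = cx_nx X (iS s)
      \<and> iS (cx_fl X s) = cx_fl X (iS s) \<and> cx_lb X (iS s) = ie (cx_lb X s)"
      unfolding s0_def by simp
  qed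
  have c7: "\<forall>f\<in>cx_F X. bij_betw iS {s\<in>cx_S X. cx_fc X s = f} {t\<in>cx_S X. cx_fc X t = if' f}"
  proof
    fix f assume f: "f \<in> cx_F X"
    define f0 where "f0 = if' f"
    have f0: "f0 \<in> cx_F X" "pf f0 = f" unfolding f0_def using if_in if1 f by auto
    have b: "bij_betw ps {t\<in>cx_S X. cx_fc X t = f0} {s\<in>cx_S X. cx_fc X s = f}"
      using M(11)[OF f0(1)] f0(2) by simp
    have bi: "bij_betw (inv_into {t\<in>cx_S X. cx_fc X t = f0} ps) {s\<in>cx_S X. cx_fc X s = f}
        {t\<in>cx_S X. cx_fc X t = f0}" using bij_betw_inv_into[OF b] .
    have eq:  "inv_into {t\<in>cx_S X. cx_fc X t = f0} ps s = iS s"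
      if s: "s \<in> {s\<in>cx_S X. cx_fc X s = f}" for s
    proof -
      define u where "u = inv_into {t\<in>cx_S X. cx_fc X t = f0} ps s"
      have sur: "ps ` {t\<in>cx_S X. cx_fc X t = f0} = {s\<in>cx_S X. cx_fc X s = f}"
        using b by (simp add: bij_betw_def)
      have s': "s \<in> ps ` {t\<in>cx_S X. cx_fc X t = f0}" using sur s by simp
      have u: "u \<in> {t\<in>cx_S X. cx_fc X t = f0}" "ps u = s"
        unfolding u_def using inv_into_into[OF s'] f_inv_into_f[OF s'] by auto
      thus ?thesis unfolding u_def[symmetric] using is2 by auto
    qed
    show "bij_betw iS {s\<in>cx_S X. cx_fc X s = f} {t\<in>cx_S X. cx_fc X t = if' f}"
      using bij_betw_cong[of "{s\<in>cx_S X. cx_fc X s = f}" "inv_into {t\<in>cx_S X. cx_fc X t = f0} ps" iS] bi eq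
      unfolding f0_def by blast
  qed
  have cm: "cmap X X \<psi>"
    unfolding cmap_def \<psi>_def cmor.select_convs
    apply (intro conjI c5 c6 c7)
    using iv_in ie_in if_in is_in by auto
  have a1: "agree_on X (hcomp \<psi> \<phi>) hid"
    unfolding agree_on_def hcomp_def hid_def \<psi>_def using iv2 ie2 if2 is2 by simp
  have a2: "agree_on X (hcomp \<phi> \<psi>) hid"
    unfolding agree_on_def hcomp_def hid_def \<psi>_def using iv1 ie1 if1 is1 by simp
  show ?thesis unfolding cx_iso_def using phimap cm a1 a2 by blast
qed

end


theorem lemma6p10:
  fixes G :: "('g,'x) monoid_scheme"
    and X :: "('v,'e,'f,'s) cplx"
    and act :: "'g \<Rightarrow> ('v,'e,'f,'s,'v,'e,'f,'s) cmor"
    and \<phi> :: "('v,'e,'f,'s,'v,'e,'f,'s) cmor"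
  assumes "G_complex G X act"
    and "cx_connected X"
    and "proper_action G X act"
    and "cocompact_action G X act"
    and "equivariant G X act \<phi>"
    and "immersion X X \<phi>"
  shows "cx_iso X X \<phi>"
  using L.main[of G X act \<phi>] assms unfolding L_def by blast

end
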